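(* Let $k\ge 4$ be an integer and let $t$ be a positive integer divisible by $\operatorname{lcm}(2,3,\ldots,2k-1)$. If $S$ is a $k$-bounded zero-sum sequence of length $t+k^2-k-1$ that is $t$-avoiding, then either all terms of $S$ lie in $\{-1,k-1,k\}$ or all terms of $S$ lie in $\{1,-(k-1),-k\}$.
   Context: A sequence is a finite multiset of integers; its length is counted with multiplicity and a subsequence is a sub-multiset. $S$ is zero-sum if the sum of its terms is $0$, and $k$-bounded if all terms lie in $[-k,k]$. A zero-sum sequence is $t$-avoiding if it has no zero-sum subsequence of length exactly $t$. *)

theory Defs
  imports Main "HOL-Library.Multiset"
begin

text \<open>Sequences are finite multisets of integers.\<close>

definition zero_sum :: "int multiset \<Rightarrow> bool" where
  "zero_sum S \<longleftrightarrow> sum_mset S = 0"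

definition k_bounded :: "int \<Rightarrow> int multiset \<Rightarrow> bool" where
  "k_bounded k S \<longleftrightarrow> (\<forall>x \<in># S. -k \<le> x \<and> x \<le> k)"

definition t_avoiding :: "nat \<Rightarrow> int multiset \<Rightarrow> bool" where
  "t_avoiding t S \<longleftrightarrow> zero_sum S \<and>
     \<not> (\<exists>T. T \<subseteq># S \<and> size T = t \<and> zero_sum T)"

end

theory Submission
  imports Defs
begin


definition pf :: "int list \<Rightarrow> int \<Rightarrow> int \<Rightarrow> nat \<Rightarrow> int" where
  "pf xs c N i = (sum_list (take i xs) + c * int i) mod N"

lemma pf_inj:
  fixes xs :: "int list" and c N :: int
  assumes N: "N > 0"
    and zsf: "\<forall>Z. Z \<subseteq># mset xs \<longrightarrow> Z \<noteq> {#} \<longrightarrow> \<not> N dvd (sum_mset Z + c * int (size Z))"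
  shows "inj_on (pf xs c N) {0..length xs}"
proof -
  have lt: "pf xs c N i \<noteq> pf xs c N j" if ij: "i < j" "j \<le> length xs" for i j
  proof
    assume eq: "pf xs c N i = pf xs c N j"
    define Zs where "Zs = take (j - i) (drop i xs)"
    have tj: "take j xs = take i xs @ Zs"
      using take_add[of i "j - i" xs] ij by (simp add: Zs_def)
    have "xs = take j xs @ drop j xs" by simp
    hence "mset xs = mset (take i xs) + mset Zs + mset (drop j xs)"
      by (metis tj mset_append)
    hence sub: "mset Zs \<subseteq># mset xs" by simp
    have len: "length Zs = j - i" using ij by (simp add: Zs_def)
    hence ne: "mset Zs \<noteq> {#}" using ij by auto
    have "N dvd ((sum_list (take j xs) + c * int j) - (sum_list (take i xs) + c * int i))"
      using eq unfolding pf_def by (metis mod_eq_dvd_iff)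
    moreover have "(sum_list (take j xs) + c * int j) - (sum_list (take i xs) + c * int i)
        = sum_mset (mset Zs) + c * int (size (mset Zs))"
      using tj len ij by (simp add: sum_mset_sum_list algebra_simps of_nat_diff)
    ultimately show False using zsf sub ne by metis
  qed
  show ?thesis
  proof (rule inj_onI)
    fix i j assume "i \<in> {0..length xs}" "j \<in> {0..length xs}" "pf xs c N i = pf xs c N j"
    thus "i = j" using lt by (metis atLeastAtMost_iff linorder_neqE_nat)
  qed
qed

lemma pf_range: "N > 0 \<Longrightarrow> pf xs c N i \<in> {0..<N}"
  by (simp add: pf_def)

lemma dav1:
  fixes T :: "int multiset" and c N :: int
  assumes N: "N > 0"
    and zsf: "\<forall>Z. Z \<subseteq># T \<longrightarrow> Z \<noteq> {#} \<longrightarrow> \<not> N dvd (sum_mset Z + c * int (size Z))"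
  shows "int (size T) < N"
proof -
  obtain xs where xs: "mset xs = T" using ex_mset by blast
  have inj: "inj_on (pf xs c N) {0..length xs}" using pf_inj[OF N] zsf xs by blast
  have "pf xs c N ` {0..length xs} \<subseteq> {0..<N}" using pf_range[OF N] by blast
  hence "card {0..length xs} \<le> card {0..<N}"
    using card_inj_on_le[OF inj] by (meson finite_atLeastLessThan_int)
  hence "length xs + 1 \<le> nat N" by simp
  thus ?thesis using xs N by auto
qed

lemma pf_surj:
  fixes xs :: "int list" and c N :: int
  assumes N: "N > 0" and inj: "inj_on (pf xs c N) {0..length xs}" and len: "int (length xs) = N - 1"
  shows "pf xs c N ` {0..length xs} = {0..<N}"
proof (rule card_subset_eq)
  show "finite {0..<N}" by simp
  show "pf xs c N ` {0..length xs} \<subseteq> {0..<N}" using pf_range[OF N] by blast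
  show "card (pf xs c N ` {0..length xs}) = card {0..<N}"
    using card_image[OF inj] len by simp
qed

lemma dav2:
  fixes T :: "int multiset" and c N u v :: int
  assumes N: "N > 0"
    and zsf: "\<forall>Z. Z \<subseteq># T \<longrightarrow> Z \<noteq> {#} \<longrightarrow> \<not> N dvd (sum_mset Z + c * int (size Z))"
    and sz: "int (size T) = N - 1" and u: "u \<in># T" and v: "v \<in># T"
  shows "N dvd (u - v)"
proof (cases "u = v")
  case True thus ?thesis by simp
next
  case False
  have "v \<in># T - {#u#}" using v False by (simp add: in_diff_count)
  hence "T - {#u#} = add_mset v (T - {#u#} - {#v#})" by (metis insert_DiffM)
  moreover have "T = add_mset u (T - {#u#})" using u by simp
  ultimately have "T = add_mset u (add_mset v (T - {#u#} - {#v#}))" by simp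
  then obtain R where T: "T = add_mset u (add_mset v R)" by blast
  obtain rs where rs: "mset rs = R" using ex_mset by blast
  define xs1 where "xs1 = u # v # rs"
  define xs2 where "xs2 = v # u # rs"
  have m1: "mset xs1 = T" and m2: "mset xs2 = T" using T rs by (auto simp: xs1_def xs2_def)
  have inj1: "inj_on (pf xs1 c N) {0..length xs1}" by (rule pf_inj[OF N]) (simp add: m1 zsf)
  have inj2: "inj_on (pf xs2 c N) {0..length xs2}" by (rule pf_inj[OF N]) (simp add: m2 zsf)
  have l1: "int (length xs1) = N - 1" and l2: "int (length xs2) = N - 1"
    using sz m1 m2 size_mset by metis+
  have ll: "length xs1 = length xs2" by (simp add: xs1_def xs2_def)
  have ge2: "length xs1 \<ge> 2" by (simp add: xs1_def)
  have "pf xs1 c N 1 \<in> pf xs2 c N ` {0..length xs2}"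
    unfolding pf_surj[OF N inj2 l2] using pf_range[OF N] by simp
  then obtain i where i: "i \<le> length xs2" "pf xs2 c N i = pf xs1 c N 1" by auto
  have same: "pf xs2 c N i = pf xs1 c N i" if "i \<ge> 2" for i
  proof -
    define j where "j = i - 2"
    have j: "i = Suc (Suc j)" using that by (simp add: j_def)
    show ?thesis by (simp add: pf_def xs1_def xs2_def j algebra_simps)
  qed
  show ?thesis
  proof (cases "i = 0")
    case True
    hence "pf xs1 c N 0 = pf xs1 c N 1" using i by (simp add: pf_def)
    moreover have "0 \<in> {0..length xs1}" "1 \<in> {0..length xs1}" using ge2 by auto
    ultimately have "(0::nat) = 1" using inj1 by (meson inj_onD)
    thus ?thesis by simp
  next
    case False
    show ?thesis
    proof (cases "i = 1")
      case True
      hence "(v + c) mod N = (u + c) mod N" using i by (simp add: pf_def xs1_def xs2_def)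
      hence "N dvd ((u + c) - (v + c))" by (metis mod_eq_dvd_iff)
      thus ?thesis by simp
    next
      case False
      hence "i \<ge> 2" using \<open>i \<noteq> 0\<close> by simp
      hence "pf xs1 c N i = pf xs1 c N 1" using same i by simp
      moreover have "i \<in> {0..length xs1}" "1 \<in> {0..length xs1}" using i ll ge2 by auto
      ultimately have "i = 1" using inj1 by (meson inj_onD)
      thus ?thesis using False by simp
    qed
  qed
qed

lemma sum_mset_upper:
  fixes T :: "int multiset"
  assumes "\<forall>x\<in>#T. x \<le> u"
  shows "sum_mset T \<le> int (size T) * u"
  using assms
proof (induction T)
  case empty thus ?case by simp
next
  case (add x T) thus ?case by (simp add: algebra_simps)
qed

lemma sum_mset_lower:
  fixes T :: "int multiset"
  assumes "\<forall>x\<in>#T. l \<le> x"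
  shows "int (size T) * l \<le> sum_mset T"
  using assms
proof (induction T)
  case empty thus ?case by simp
next
  case (add x T) thus ?case by (simp add: algebra_simps)
qed

lemma sum_mset_cong_mod:
  fixes T :: "int multiset"
  assumes "\<forall>x\<in>#T. N dvd (x - x0)"
  shows "N dvd (sum_mset T - int (size T) * x0)"
  using assms
proof (induction T)
  case empty thus ?case by simp
next
  case (add x T)
  hence "N dvd (sum_mset T - int (size T) * x0)" "N dvd (x - x0)" by auto
  hence "N dvd ((sum_mset T - int (size T) * x0) + (x - x0))" by (rule dvd_add)
  thus ?case by (simp add: algebra_simps)
qed

lemma crit_contra:
  fixes S T :: "int multiset" and a b M :: int
  assumes avoid: "\<forall>R. R \<subseteq># S \<longrightarrow> sum_mset R = 0 \<longrightarrow> int (size R) \<noteq> M"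
    and ab: "a > 0" "b > 0"
    and ca: "int (count S a) \<ge> M" and cb: "int (count S (-b)) \<ge> M"
    and T: "T \<subseteq># filter_mset (\<lambda>x. x \<noteq> a \<and> x \<noteq> -b) S"
    and dv: "(a+b) dvd (b*M - (sum_mset T + b * int (size T)))"
    and p: "sum_mset T + b * int (size T) \<le> b*M"
    and q: "a * int (size T) - sum_mset T \<le> a*M"
  shows False
proof -
  define P where "P = sum_mset T + b * int (size T)"
  define al where "al = (b*M - P) div (a+b)"
  have al_eq: "al * (a+b) = b*M - P" using dv by (simp add: al_def P_def)
  define be where "be = M - int (size T) - al"
  have al0: "al \<ge> 0"
  proof -
    have "al * (a+b) \<ge> 0" using al_eq p by (simp add: P_def)
    thus ?thesis using ab by (simp add: zero_le_mult_iff)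
  qed
  have be_eq: "be * (a+b) = a*M - a * int (size T) + sum_mset T"
    unfolding be_def using al_eq by (simp add: algebra_simps P_def)
  have be0: "be \<ge> 0"
  proof -
    have "be * (a+b) \<ge> 0" using be_eq q by simp
    thus ?thesis using ab by (simp add: zero_le_mult_iff)
  qed
  have alM: "al \<le> M" and beM: "be \<le> M" using al0 be0 by (simp_all add: be_def)
  define R where "R = T + replicate_mset (nat al) a + replicate_mset (nat be) (-b)"
  have TS: "T \<subseteq># S" using T multiset_filter_subset subset_mset.order_trans by blast
  have cTa: "count T a = 0" and cTb: "count T (-b) = 0"
    using T by (metis (mono_tags, lifting) count_filter_mset le_zero_eq subseteq_mset_def)+
  have anb: "a \<noteq> -b" using ab by simp
  have "R \<subseteq># S"
    unfolding subseteq_mset_def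
  proof
    fix x
    show "count R x \<le> count S x"
    proof (cases "x = a")
      case True
      thus ?thesis using cTa anb alM ca al0 by (simp add: R_def)
    next
      case False
      show ?thesis
      proof (cases "x = -b")
        case True
        thus ?thesis using cTb anb beM cb be0 False by (simp add: R_def)
      next
        case False2: False
        thus ?thesis using False TS by (simp add: R_def mset_subset_eq_count)
      qed
    qed
  qed
  moreover have "sum_mset R = 0"
  proof -
    have "sum_mset R = sum_mset T + al * a - be * b"
      using al0 be0 by (simp add: R_def sum_mset_replicate_mset)
    also have "\<dots> = 0" using al_eq unfolding be_def P_def by (simp add: algebra_simps)
    finally show ?thesis .
  qed
  moreover have "int (size R) = M" using al0 be0 by (simp add: R_def be_def)
  ultimately show False using avoid by blast
qed

lemma global_cong:
  fixes S :: "int multiset" and a b M t :: int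
  assumes sum0: "sum_mset S = 0" and sz: "int (size S) = t + M"
    and dv: "(a+b) dvd (b*t)" and anb: "a \<noteq> -b"
  shows "(a+b) dvd (b*M - (sum_mset (filter_mset (\<lambda>x. x \<noteq> a \<and> x \<noteq> -b) S)
            + b * int (size (filter_mset (\<lambda>x. x \<noteq> a \<and> x \<noteq> -b) S))))"
proof -
  define Om where "Om = filter_mset (\<lambda>x. x \<noteq> a \<and> x \<noteq> -b) S"
  have S_eq: "S = Om + replicate_mset (count S a) a + replicate_mset (count S (-b)) (-b)"
    by (rule multiset_eqI) (use anb in \<open>auto simp: Om_def\<close>)
  have s1: "sum_mset S = sum_mset Om + int (count S a) * a - int (count S (-b)) * b"
    by (subst S_eq) (simp add: sum_mset_replicate_mset)
  have s2: "int (size S) = int (size Om) + int (count S a) + int (count S (-b))"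
    by (subst S_eq) simp
  have e1: "M = int (size Om) + int (count S a) + int (count S (-b)) - t" using s2 sz by simp
  have e2: "sum_mset Om = int (count S (-b)) * b - int (count S a) * a" using s1 sum0 by simp
  have "b*M - (sum_mset Om + b * int (size Om)) = int (count S a) * (a+b) - b*t"
    unfolding e1 e2 by (simp add: algebra_simps)
  moreover have "(a+b) dvd (int (count S a) * (a+b) - b*t)" using dv by simp
  ultimately show ?thesis unfolding Om_def by simp
qed

lemma minT:
  fixes Om :: "int multiset" and N c b :: int
  assumes "N dvd (c - (sum_mset Om + b * int (size Om)))"
  shows "\<exists>T. T \<subseteq># Om \<and> N dvd (c - (sum_mset T + b * int (size T))) \<and>
     (\<forall>Z. Z \<subseteq># T \<longrightarrow> Z \<noteq> {#} \<longrightarrow> \<not> N dvd (sum_mset Z + b * int (size Z)))"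
proof -
  define Q where "Q T \<longleftrightarrow> T \<subseteq># Om \<and> N dvd (c - (sum_mset T + b * int (size T)))" for T
  have ex: "\<exists>n T. Q T \<and> size T = n" using assms by (auto simp: Q_def)
  define n0 where "n0 = (LEAST n. \<exists>T. Q T \<and> size T = n)"
  obtain T where T: "Q T" "size T = n0" using LeastI_ex[OF ex] unfolding n0_def by blast
  have least: "n0 \<le> size T'" if "Q T'" for T'
    unfolding n0_def by (rule Least_le) (use that in blast)
  have "\<not> N dvd (sum_mset Z + b * int (size Z))" if Z: "Z \<subseteq># T" "Z \<noteq> {#}" for Z
  proof
    assume d: "N dvd (sum_mset Z + b * int (size Z))"
    have "Q (T - Z)"
    proof -
      have sub: "T - Z \<subseteq># Om" using T(1) unfolding Q_def
        by (meson diff_subset_eq_self subset_mset.order_trans)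
      have eqz: "c - (sum_mset (T - Z) + b * int (size (T - Z)))
          = (c - (sum_mset T + b * int (size T))) + (sum_mset Z + b * int (size Z))"
        using Z(1) by (simp add: sum_mset_diff size_Diff_submset of_nat_diff size_mset_mono algebra_simps)
      have "N dvd ((c - (sum_mset T + b * int (size T))) + (sum_mset Z + b * int (size Z)))"
        using T(1) d unfolding Q_def by (metis dvd_add)
      hence "N dvd (c - (sum_mset (T - Z) + b * int (size (T - Z))))"
        by (simp only: eqz)
      thus ?thesis using sub unfolding Q_def by simp
    qed
    hence "n0 \<le> size (T - Z)" by (rule least)
    moreover have "size (T - Z) < size T"
    proof -
      have "size Z > 0" using Z(2) by (simp add: nonempty_has_size)
      moreover have "size Z \<le> size T" using Z(1) by (rule size_mset_mono)
      ultimately show ?thesis using Z(1) by (simp add: size_Diff_submset)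
    qed
    ultimately show False using T(2) by simp
  qed
  thus ?thesis using T(1) unfolding Q_def by blast
qed

lemma all_eq_replicate:
  fixes T :: "'a multiset"
  assumes "\<forall>x\<in>#T. x = c"
  shows "T = replicate_mset (size T) c"
  using assms by (induction T) auto

lemma add_rep_sub:
  fixes Om :: "'a multiset"
  assumes y: "y \<in># Om" and yc: "y \<noteq> c" and n: "n \<le> count Om c"
  shows "add_mset y (replicate_mset n c) \<subseteq># Om"
  unfolding subseteq_mset_def
proof
  fix z
  have "0 < count Om y" using y by simp
  thus "count (add_mset y (replicate_mset n c)) z \<le> count Om z"
    using yc n by (cases "z = y"; cases "z = c") auto
qed

lemma dvd_two_cases:
  fixes n y :: int
  assumes n: "n > 0" and d: "n dvd y" and lo: "-n < y" and hi: "y < 2*n"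
  shows "y = 0 \<or> y = n"
proof -
  obtain q where q: "y = n * q" using d by (auto elim: dvdE)
  have "n * (-1) < n * q" using lo q by simp
  hence q1: "-1 < q" using n mult_less_cancel_left_pos by blast
  have "n * q < n * 2" using hi q by (simp add: mult.commute)
  hence q2: "q < 2" using n mult_less_cancel_left_pos by blast
  have "q = 0 \<or> q = 1" using q1 q2 by linarith
  thus ?thesis using q by auto
qed

lemma dvd_three_cases:
  fixes n y :: int
  assumes n: "n > 0" and d: "n dvd y" and lo: "-n < y" and hi: "y < 3*n"
  shows "y = 0 \<or> y = n \<or> y = 2*n"
proof -
  obtain q where q: "y = n * q" using d by (auto elim: dvdE)
  have "n * (-1) < n * q" using lo q by simp
  hence q1: "-1 < q" using n mult_less_cancel_left_pos by blast
  have "n * q < n * 3" using hi q by (simp add: mult.commute)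
  hence q2: "q < 3" using n mult_less_cancel_left_pos by blast
  have "q = 0 \<or> q = 1 \<or> q = 2" using q1 q2 by linarith
  thus ?thesis using q by auto
qed



lemma partI:
  fixes S :: "int multiset" and k t M a :: int
  assumes k4: "k \<ge> 4" and M: "M = k^2 - k - 1"
    and bnd: "\<forall>x\<in>#S. -k \<le> x \<and> x \<le> k"
    and avoid: "\<forall>R. R \<subseteq># S \<longrightarrow> sum_mset R = 0 \<longrightarrow> int (size R) \<noteq> M"
    and sum0: "sum_mset S = 0" and sz: "int (size S) = t + M"
    and divt: "\<forall>N. 2 \<le> N \<and> N \<le> 2*k - 1 \<longrightarrow> N dvd t"
    and cm1: "int (count S (-1)) \<ge> M"
    and a1: "1 \<le> a" and ak: "a \<le> k" and ca: "int (count S a) \<ge> M"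
  shows "set_mset S \<subseteq> {-1, k-1, k}"
proof -
  define Om where "Om = filter_mset (\<lambda>x. x \<noteq> a \<and> x \<noteq> -1) S"
  have kk: "k*k \<ge> 4*k" using k4 by (simp add: mult_right_mono)
  have Msq: "M = k*k - k - 1" using M by (simp add: power2_eq_square)
  have dvt: "(a+1) dvd (1*t)" using divt a1 ak k4 by auto
  have g: "(a+1) dvd (1*M - (sum_mset Om + 1 * int (size Om)))"
    using global_cong[OF sum0 sz dvt] a1 unfolding Om_def by simp
  obtain T where T: "T \<subseteq># Om" and Td: "(a+1) dvd (1*M - (sum_mset T + 1 * int (size T)))"
    and zsf: "\<forall>Z. Z \<subseteq># T \<longrightarrow> Z \<noteq> {#} \<longrightarrow> \<not> (a+1) dvd (sum_mset Z + 1 * int (size Z))"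
    using minT[OF g] by blast
  have Tlt: "int (size T) < a + 1" using dav1[of "a+1" T 1] zsf a1 by auto
  have crit: False if "T' \<subseteq># Om" "(a+1) dvd (M - (sum_mset T' + int (size T')))"
    "sum_mset T' + int (size T') \<le> M" "a * int (size T') - sum_mset T' \<le> a*M" for T'
    using crit_contra[OF avoid, of a 1 T'] a1 cm1 ca that unfolding Om_def by auto
  have Oel: "-k \<le> x \<and> x \<le> k \<and> x \<noteq> a \<and> x \<noteq> -1" if "x \<in># Om" for x
    using bnd that unfolding Om_def by auto
  have Tel: "-k \<le> x \<and> x \<le> k \<and> x \<noteq> a \<and> x \<noteq> -1" if "x \<in># T" for x
    using Oel[OF mset_subset_eqD[OF T that]] .
  define s where "s = int (size T)"
  have s0: "s \<ge> 0" by (simp add: s_def)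
  have sumlo: "sum_mset T \<ge> s * (-k)" unfolding s_def using Tel by (intro sum_mset_lower) auto
  have concl: "set_mset S \<subseteq> {-1, k-1, k}" if "\<forall>y\<in>#Om. y = k - 1 \<or> y = k" "a = k - 1 \<or> a = k"
  proof
    fix x assume x: "x \<in> set_mset S"
    show "x \<in> {-1, k-1, k}"
    proof (cases "x = a \<or> x = -1")
      case True thus ?thesis using that(2) by auto
    next
      case False
      hence "x \<in># Om" using x unfolding Om_def by simp
      thus ?thesis using that(1) by auto
    qed
  qed
  consider "a \<le> k - 2" | "a = k - 1" | "a = k" using ak by linarith
  thus ?thesis
  proof cases
    case 1
    have sup: "sum_mset T \<le> s * k" unfolding s_def using Tel by (intro sum_mset_upper) auto
    have sa: "s \<le> a" using Tlt s_def by simp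
    have "s * (k+1) \<le> (k-2) * (k+1)" using sa 1 k4 s0 by (intro mult_right_mono) auto
    hence P: "sum_mset T + s \<le> M" using sup Msq by (simp add: algebra_simps)
    have "s * (a+k) \<le> a * (a+k)" using sa a1 k4 by (intro mult_right_mono) auto
    moreover have "a + k \<le> M" using kk Msq 1 k4 by linarith
    hence "a * (a+k) \<le> a * M" using a1 by (intro mult_left_mono) auto
    ultimately have Q: "a * s - sum_mset T \<le> a * M" using sumlo by (simp add: algebra_simps)
    show ?thesis using crit[OF T _ _ Q[unfolded s_def]] Td P[unfolded s_def] by simp
  next
    case 2
    have sup: "sum_mset T \<le> s * k" unfolding s_def using Tel by (intro sum_mset_upper) auto
    have sk: "s \<le> k - 1" using Tlt s_def 2 by simp
    have Td': "k dvd (M - (sum_mset T + s))" using Td 2 s_def by simp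
    have m2: "2*k - 1 \<le> M" using kk Msq k4 by linarith
    have kM: "(k-1) * (2*k-1) \<le> (k-1) * M" using m2 k4 by (intro mult_left_mono) auto
    consider "s \<le> k - 2" | "s = k - 1" using sk by linarith
    thus ?thesis
    proof cases
      case 1
      have "s * (k+1) \<le> (k-2) * (k+1)" using 1 k4 s0 by (intro mult_right_mono) auto
      hence P: "sum_mset T + s \<le> M" using sup Msq by (simp add: algebra_simps)
      have "(2*k-1) * s \<le> (2*k-1) * (k-1)" using 1 k4 by (intro mult_left_mono) auto
      hence Q: "(k-1) * s - sum_mset T \<le> (k-1) * M" using sumlo kM by (simp add: algebra_simps)
      show ?thesis using crit[OF T] Td' P Q 2 s_def by simp
    next
      case 22: 2
      have szT: "int (size T) = (a+1) - 1" using 22 2 s_def by simp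
      have cong: "(a+1) dvd (u - v)" if "u \<in># T" "v \<in># T" for u v
        using dav2[of "a+1" T 1 u v] zsf szT that a1 by auto
      have cong': "k dvd (u - v)" if "u \<in># T" "v \<in># T" for u v
        using cong[OF that] 2 by simp
      have "T \<noteq> {#}" using 22 k4 s_def by auto
      then obtain x0 where x0: "x0 \<in># T" by blast
      have cm: "k dvd (sum_mset T - s * x0)"
        unfolding s_def using cong'[OF _ x0] by (intro sum_mset_cong_mod) auto
      have "x0 = (M - (sum_mset T + s)) + (sum_mset T - s * x0) - k*(k-2-x0)"
        unfolding 22 Msq by (simp add: algebra_simps)
      moreover have "k dvd ((M - (sum_mset T + s)) + (sum_mset T - s * x0) - k*(k-2-x0))"
        by (rule dvd_diff[OF dvd_add[OF Td' cm]]) simp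
      ultimately have d0: "k dvd x0" by simp
      have vals: "x = -k \<or> x = 0 \<or> x = k" if x: "x \<in># T" for x
      proof -
        have "k dvd ((x - x0) + x0 + k)" using dvd_add[OF dvd_add[OF cong'[OF x x0] d0] dvd_refl] by simp
        hence "k dvd (x + k)" by simp
        moreover have "-k < x + k" "x + k < 3*k" using Tel[OF x] k4 by auto
        ultimately have "x + k = 0 \<or> x + k = k \<or> x + k = 2*k" using dvd_three_cases[of k "x+k"] k4 by auto
        thus ?thesis by auto
      qed
      show ?thesis
      proof (cases "\<exists>x\<in>#T. x \<noteq> k")
        case True
        then obtain x where x: "x \<in># T" "x \<noteq> k" by blast
        have x0': "x \<le> 0" using vals[OF x(1)] x(2) k4 by auto
        define T0 where "T0 = T - {#x#}"
        have sT: "sum_mset T = x + sum_mset T0" using x(1) by (simp add: T0_def sum_mset.remove)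
        have "size T \<ge> 1" using 22 s_def k4 by simp
        hence szT0: "int (size T0) = k - 2" using x(1) 22 s_def by (simp add: T0_def size_Diff_singleton of_nat_diff)
        have "sum_mset T0 \<le> int (size T0) * k"
          using Tel by (intro sum_mset_upper) (auto simp: T0_def dest: in_diffD)
        hence "sum_mset T0 \<le> (k-2)*k" using szT0 by simp
        hence P: "sum_mset T + s \<le> M" using sT 22 Msq x0' by (simp add: algebra_simps)
        have "(2*k-1) * s \<le> (2*k-1) * (k-1)" using 22 k4 by simp
        hence Q: "(k-1) * s - sum_mset T \<le> (k-1) * M" using sumlo kM by (simp add: algebra_simps)
        show ?thesis using crit[OF T] Td' P Q 2 s_def by simp
      next
        case False
        hence allv: "\<forall>x\<in>#T. x = k" by blast
        have "count T k = size T" using all_eq_replicate[OF allv] by (metis count_replicate_mset)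
        moreover have "count T k \<le> count Om k" using T by (simp add: mset_subset_eq_count)
        ultimately have cOm: "int (count Om k) \<ge> k - 1" using 22 s_def by simp
        show ?thesis
        proof (cases "\<exists>y\<in>#Om. y \<noteq> k")
          case True
          then obtain y where y: "y \<in># Om" "y \<noteq> k" by blast
          have yb: "-k \<le> y" "y \<le> k - 2" "y \<noteq> -1" using Oel[OF y(1)] y(2) 2 by auto
          define j where "j = (if y \<ge> 0 then k - 2 - y else -2 - y)"
          have j0: "j \<ge> 0" and jk: "j \<le> k - 2" using yb by (auto simp: j_def)
          define T' where "T' = add_mset y (replicate_mset (nat j) k)"
          have "nat j \<le> count Om k" using cOm jk by (simp add: nat_le_iff)
          hence T'sub: "T' \<subseteq># Om" unfolding T'_def by (rule add_rep_sub[OF y(1) y(2)])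
          have sT': "sum_mset T' = y + j*k" using j0 by (simp add: T'_def sum_mset_replicate_mset)
          have zT': "int (size T') = 1 + j" using j0 by (simp add: T'_def)
          have PD: "M - (sum_mset T' + int (size T')) = k * (if y \<ge> 0 then y else k + 1 + y)"
            using sT' zT' Msq by (simp add: j_def algebra_simps)
          have pos: "(if y \<ge> 0 then y else k + 1 + y) \<ge> 0" using yb by auto
          have "k * (if y \<ge> 0 then y else k + 1 + y) \<ge> 0" using pos k4 by simp
          hence P: "sum_mset T' + int (size T') \<le> M" using PD by linarith
          have D: "k dvd (M - (sum_mset T' + int (size T')))" using PD by simp
          have lo': "sum_mset T' \<ge> int (size T') * (-k)"
            using yb k4 by (intro sum_mset_lower) (auto simp: T'_def)
          have "(2*k-1) * (1+j) \<le> (2*k-1) * (k-1)" using jk k4 by (intro mult_left_mono) auto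
          hence Q: "(k-1) * int (size T') - sum_mset T' \<le> (k-1) * M" using lo' zT' kM by (simp add: algebra_simps)
          show ?thesis using crit[OF T'sub] D P Q 2 by simp
        next
          case False
          hence "\<forall>y\<in>#Om. y = k - 1 \<or> y = k" by blast
          thus ?thesis using concl 2 by blast
        qed
      qed
    qed
  next
    case 3
    have Tel': "x \<le> k - 1" if "x \<in># T" for x using Tel[OF that] 3 by auto
    have sup: "sum_mset T \<le> s * (k-1)" unfolding s_def using Tel' by (intro sum_mset_upper) auto
    have sk: "s \<le> k" using Tlt s_def 3 by simp
    have Td': "(k+1) dvd (M - (sum_mset T + s))" using Td 3 s_def by simp
    have twok: "2*k \<le> M" using kk Msq k4 by linarith
    have kM: "k * (2*k) \<le> k * M" using twok k4 by (intro mult_left_mono) auto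
    consider "s \<le> k - 1" | "s = k" using sk by linarith
    thus ?thesis
    proof cases
      case 1
      have "s * k \<le> (k-1) * k" using 1 k4 by (intro mult_right_mono) auto
      hence P1: "sum_mset T + s \<le> M + 1" using sup Msq by (simp add: algebra_simps)
      have P: "sum_mset T + s \<le> M"
      proof (rule ccontr)
        assume "\<not> sum_mset T + s \<le> M"
        hence "sum_mset T + s = M + 1" using P1 by simp
        hence "(k+1) dvd (-1)" using Td' by simp
        hence "(k+1) dvd 1" by simp
        hence "k + 1 \<le> 1" by (rule zdvd_imp_le) simp
        thus False using k4 by simp
      qed
      have "k * s \<le> k * k" using sk k4 by (intro mult_left_mono) auto
      hence Q: "k * s - sum_mset T \<le> k * M" using sumlo kM by (simp add: algebra_simps)
      show ?thesis using crit[OF T] Td' P Q 3 s_def by simp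
    next
      case 2
      have szT: "int (size T) = (a+1) - 1" using 2 3 s_def by simp
      have cong: "(a+1) dvd (u - v)" if "u \<in># T" "v \<in># T" for u v
        using dav2[of "a+1" T 1 u v] zsf szT that a1 by auto
      have cong': "(k+1) dvd (u - v)" if "u \<in># T" "v \<in># T" for u v
        using cong[OF that] 3 by simp
      have "T \<noteq> {#}" using 2 k4 s_def by auto
      then obtain x0 where x0: "x0 \<in># T" by blast
      have cm: "(k+1) dvd (sum_mset T - s * x0)"
        unfolding s_def using cong'[OF _ x0] by (intro sum_mset_cong_mod) auto
      have "x0 + 2 = (M - (sum_mset T + s)) + (sum_mset T - s * x0) - (k+1)*(k-3-x0)"
        using Msq 2 by (simp add: algebra_simps)
      moreover have "(k+1) dvd ((M - (sum_mset T + s)) + (sum_mset T - s * x0) - (k+1)*(k-3-x0))"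
        by (rule dvd_diff[OF dvd_add[OF Td' cm]]) simp
      ultimately have d0: "(k+1) dvd (x0 + 2)" by simp
      have vals: "x = -2 \<or> x = k - 1" if x: "x \<in># T" for x
      proof -
        have "(k+1) dvd ((x - x0) + (x0 + 2))" using dvd_add[OF cong'[OF x x0] d0] by simp
        hence "(k+1) dvd (x + 2)" by simp
        moreover have "-(k+1) < x + 2" "x + 2 < 2*(k+1)" using Tel[OF x] Tel'[OF x] k4 by auto
        ultimately have "x + 2 = 0 \<or> x + 2 = k + 1" using dvd_two_cases[of "k+1" "x+2"] k4 by auto
        thus ?thesis by auto
      qed
      show ?thesis
      proof (cases "-2 \<in># T")
        case True
        define T0 where "T0 = T - {#-2#}"
        have sT: "sum_mset T = -2 + sum_mset T0" using True by (simp add: T0_def sum_mset.remove)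
        have "size T \<ge> 1" using 2 s_def k4 by simp
        hence szT0: "int (size T0) = k - 1" using True 2 s_def by (simp add: T0_def size_Diff_singleton of_nat_diff)
        have "sum_mset T0 \<le> int (size T0) * (k-1)"
          using Tel' by (intro sum_mset_upper) (auto simp: T0_def dest: in_diffD)
        hence "sum_mset T0 \<le> (k-1)*(k-1)" using szT0 by simp
        hence P: "sum_mset T + s \<le> M" using sT 2 Msq by (simp add: algebra_simps)
        have Q: "k * s - sum_mset T \<le> k * M" using sumlo kM 2 by (simp add: algebra_simps)
        show ?thesis using crit[OF T] Td' P Q 3 s_def by simp
      next
        case False
        have allv: "\<forall>x\<in>#T. x = k - 1" using vals False by blast
        have "count T (k-1) = size T" using all_eq_replicate[OF allv] by (metis count_replicate_mset)
        moreover have "count T (k-1) \<le> count Om (k-1)" using T by (simp add: mset_subset_eq_count)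
        ultimately have cOm: "int (count Om (k-1)) \<ge> k" using 2 s_def by simp
        show ?thesis
        proof (cases "\<exists>y\<in>#Om. y \<noteq> k - 1")
          case True
          then obtain y where y: "y \<in># Om" "y \<noteq> k - 1" by blast
          have yb: "-k \<le> y" "y \<le> k - 2" "y \<noteq> -1" using Oel[OF y(1)] y(2) 3 by auto
          define j where "j = (if y \<ge> 0 then y else y + k + 1)"
          have j0: "j \<ge> 0" and jk: "j \<le> k - 1" using yb by (auto simp: j_def)
          define T' where "T' = add_mset y (replicate_mset (nat j) (k-1))"
          have "nat j \<le> count Om (k-1)" using cOm jk by (simp add: nat_le_iff)
          hence T'sub: "T' \<subseteq># Om" unfolding T'_def by (rule add_rep_sub[OF y(1) y(2)])
          have sT': "sum_mset T' = y + j*(k-1)" using j0 by (simp add: T'_def sum_mset_replicate_mset)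
          have zT': "int (size T') = 1 + j" using j0 by (simp add: T'_def)
          have PD: "M - (sum_mset T' + int (size T')) = (k+1) * (if y \<ge> 0 then k - 2 - y else -(y+2))"
            using sT' zT' Msq by (simp add: j_def algebra_simps)
          have pos: "(if y \<ge> 0 then k - 2 - y else -(y+2)) \<ge> 0" using yb by auto
          have "(k+1) * (if y \<ge> 0 then k - 2 - y else -(y+2)) \<ge> 0" using pos k4 by simp
          hence P: "sum_mset T' + int (size T') \<le> M" using PD by linarith
          have D: "(k+1) dvd (M - (sum_mset T' + int (size T')))" using PD by simp
          have lo': "sum_mset T' \<ge> int (size T') * (-k)"
            using yb k4 by (intro sum_mset_lower) (auto simp: T'_def)
          have "k * (1+j) \<le> k * k" using jk k4 by (intro mult_left_mono) auto
          hence Q: "k * int (size T') - sum_mset T' \<le> k * M" using lo' zT' kM by (simp add: algebra_simps)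
          show ?thesis using crit[OF T'sub] D P Q 3 by simp
        next
          case False
          hence "\<forall>y\<in>#Om. y = k - 1 \<or> y = k" by blast
          thus ?thesis using concl 3 by blast
        qed
      qed
    qed
  qed
qed



lemma ineq3:
  fixes a b k s :: int
  assumes a2: "2 \<le> a" and ak: "a \<le> k" and b2: "2 \<le> b" and bk: "b \<le> k" and s0: "0 \<le> s"
    and h: "(k \<ge> 4 \<and> s \<le> a+b-2) \<or> (k \<ge> 5 \<and> s \<le> a+b-1)"
  shows "s * (b + (if a = k then k-1 else k)) \<le> b*(k*k-k-1)"
proof -
  have k4: "k \<ge> 4" using h by auto
  have kk3: "k*(k-3) \<ge> k" using k4 by (simp add: mult_left_mono[of 1 "k-3" k, simplified])
  have kb: "k*(k-3) \<ge> b" using kk3 bk by linarith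
  have A: "(b-1)*(k*(k-3)) \<ge> (b-1)*b" using kb b2 by (intro mult_left_mono) auto
  show ?thesis
  proof (cases "a = k")
    case False
    hence pm: "b + (if a = k then k-1 else k) = b + k" by simp
    show ?thesis
    proof (cases "k \<ge> 4 \<and> s \<le> a+b-2")
      case True
      have "s * (b+k) \<le> (k+b-3)*(b+k)" using True False ak b2 k4 by (intro mult_right_mono) auto
      moreover have "(k+b-3)*(b+k) \<le> b*(k*k-k-1)"
      proof -
        have "b*(k*k-k-1) - (k+b-3)*(b+k) = (b-1)*(k*(k-3)) - b*(b-2)" by (simp add: algebra_simps)
        moreover have "(b-1)*b \<ge> b*(b-2)" using b2 by (simp add: algebra_simps)
        ultimately show ?thesis using A by linarith
      qed
      ultimately show ?thesis using pm by simp
    next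
      case False2: False
      hence hh: "k \<ge> 5" "s \<le> a+b-1" using h by auto
      have kk5: "k*(k-3) \<ge> 2*k" using hh by (simp add: mult_left_mono[of 2 "k-3" k, simplified])
      have B: "(b-1)*(k*(k-3)) \<ge> (b-1)*(2*k)" using kk5 b2 by (intro mult_left_mono) auto
      have C: "(b-1)*k \<ge> (b-1)*b" using bk b2 by (intro mult_left_mono) auto
      have D: "(b-1)*k \<ge> k" using b2 k4 by (simp add: mult_right_mono[of 1 "b-1" k, simplified])
      have "s * (b+k) \<le> (k+b-2)*(b+k)" using hh False ak b2 k4 by (intro mult_right_mono) auto
      moreover have "(k+b-2)*(b+k) \<le> b*(k*k-k-1)"
      proof -
        have "b*(k*k-k-1) - (k+b-2)*(b+k) = (b-1)*(k*(k-3)) - k + b - b*b" by (simp add: algebra_simps)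
        moreover have "(b-1)*(2*k) = (b-1)*k + (b-1)*k" by (simp add: algebra_simps)
        moreover have "(b-1)*b = b*b - b" by (simp add: algebra_simps)
        ultimately show ?thesis using B C D by linarith
      qed
      ultimately show ?thesis using pm by simp
    qed
  next
    case True
    hence pm: "b + (if a = k then k-1 else k) = b + k - 1" by simp
    show ?thesis
    proof (cases "k \<ge> 4 \<and> s \<le> a+b-2")
      case True2: True
      have "s * (b+k-1) \<le> (k+b-2)*(b+k-1)" using True2 True b2 k4 by (intro mult_right_mono) auto
      moreover have "(k+b-2)*(b+k-1) \<le> b*(k*k-k-1)"
      proof -
        have "b*(k*k-k-1) - (k+b-2)*(b+k-1) = (b-1)*(k*(k-3)) - ((b-1)*(b-1) + 1)" by (simp add: algebra_simps)
        moreover have "(b-1)*b = (b-1)*(b-1) + (b-1)" by (simp add: algebra_simps)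
        ultimately show ?thesis using A b2 by linarith
      qed
      ultimately show ?thesis using pm by (simp add: add_diff_eq)
    next
      case False2: False
      hence hh: "k \<ge> 5" "s \<le> a+b-1" using h by auto
      have kk5: "k*(k-3) \<ge> 2*k" using hh by (simp add: mult_left_mono[of 2 "k-3" k, simplified])
      have B: "(b-1)*(k*(k-3)) \<ge> (b-1)*(2*k)" using kk5 b2 by (intro mult_left_mono) auto
      have "s * (b+k-1) \<le> (k+b-1)*(b+k-1)" using hh True b2 k4 by (intro mult_right_mono) auto
      moreover have "(k+b-1)*(b+k-1) \<le> b*(k*k-k-1)"
      proof (cases "b = 2")
        case True
        have f: "k*k \<ge> 5*k" using kk5 by (simp add: algebra_simps)
        have e1: "(k+b-1)*(b+k-1) = k*k + 2*k + 1" and e2: "b*(k*k-k-1) = 2*(k*k) - 2*k - 2"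
          using True by (simp_all add: algebra_simps)
        show ?thesis unfolding e1 e2 using f hh by linarith
      next
        case False
        hence b3: "b \<ge> 3" using b2 by simp
        have E: "(2*b-3)*k \<ge> (2*b-3)*b" using bk b3 by (intro mult_left_mono) auto
        have "b*(k*k-k-1) - (k+b-1)*(b+k-1) = (b-1)*(k*(k-3)) - k + b - b*b - 1" by (simp add: algebra_simps)
        moreover have "(b-1)*(2*k) = (2*b-3)*k + k" by (simp add: algebra_simps)
        moreover have "(2*b-3)*b - (b*b - b + 1) = (b-1)*(b-1) - 2" by (simp add: algebra_simps)
        moreover have "(b-1)*(b-1) \<ge> 2*2" using b3 mult_mono[of 2 "b-1" 2 "b-1"] by simp
        ultimately show ?thesis using B E by linarith
      qed
      ultimately show ?thesis using pm by (simp add: add_diff_eq)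
    qed
  qed
qed

lemma k4elem:
  fixes a b x :: int
  assumes "2 \<le> a" "a \<le> 4" "2 \<le> b" "b \<le> 4" "-4 \<le> x" "x \<le> 4" "x \<noteq> a" "x \<noteq> -b"
    and d: "(a+b) dvd (x + 12*b)"
  shows "(a+b-1)*(x+b) \<le> 11*b \<and> (a+b-1)*(a-x) \<le> 11*a"
proof -
  have A: "a = 2 \<or> a = 3 \<or> a = 4" using assms(1,2) by presburger
  have B: "b = 2 \<or> b = 3 \<or> b = 4" using assms(3,4) by presburger
  have X: "x = -4 \<or> x = -3 \<or> x = -2 \<or> x = -1 \<or> x = 0 \<or> x = 1 \<or> x = 2 \<or> x = 3 \<or> x = 4"
    using assms(5,6) by presburger
  show ?thesis using A B X d assms(7,8) by (elim disjE) simp_all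
qed

lemma sum_mset_weighted_upper:
  fixes T :: "int multiset" and c b d :: int
  assumes "\<forall>x\<in>#T. c * (x + b) \<le> d"
  shows "c * (sum_mset T + b * int (size T)) \<le> int (size T) * d"
  using assms
proof (induction T)
  case empty thus ?case by simp
next
  case (add x T) thus ?case by (simp add: algebra_simps)
qed

lemma sum_mset_weighted_upper2:
  fixes T :: "int multiset" and c a d :: int
  assumes "\<forall>x\<in>#T. c * (a - x) \<le> d"
  shows "c * (a * int (size T) - sum_mset T) \<le> int (size T) * d"
  using assms
proof (induction T)
  case empty thus ?case by simp
next
  case (add x T) thus ?case by (simp add: algebra_simps)
qed

lemma partIII:
  fixes S :: "int multiset" and k t M a b :: int
  assumes k4: "k \<ge> 4" and M: "M = k^2 - k - 1"
    and bnd: "\<forall>x\<in>#S. -k \<le> x \<and> x \<le> k"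
    and avoid: "\<forall>R. R \<subseteq># S \<longrightarrow> sum_mset R = 0 \<longrightarrow> int (size R) \<noteq> M"
    and sum0: "sum_mset S = 0" and sz: "int (size S) = t + M"
    and divt: "\<forall>N. 2 \<le> N \<and> N \<le> 2*k - 1 \<longrightarrow> N dvd t" and t2: "2 dvd t"
    and a2: "2 \<le> a" and ak: "a \<le> k" and ca: "int (count S a) \<ge> M"
    and b2: "2 \<le> b" and bk: "b \<le> k" and cb: "int (count S (-b)) \<ge> M"
  shows False
proof -
  define Om where "Om = filter_mset (\<lambda>x. x \<noteq> a \<and> x \<noteq> -b) S"
  have Msq: "M = k*k - k - 1" using M by (simp add: power2_eq_square)
  have dvt: "(a+b) dvd (b*t)"
  proof (cases "a + b \<le> 2*k - 1")
    case True
    hence "(a+b) dvd t" using divt a2 b2 by auto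
    thus ?thesis by simp
  next
    case False
    hence ab: "a = k" "b = k" using ak bk by auto
    obtain r where r: "t = 2*r" using t2 by (auto elim: dvdE)
    have "b*t = (a+b)*r" using ab r by (simp add: algebra_simps)
    thus ?thesis by simp
  qed
  have anb: "a \<noteq> -b" using a2 b2 by simp
  have g: "(a+b) dvd (b*M - (sum_mset Om + b * int (size Om)))"
    using global_cong[OF sum0 sz dvt anb] unfolding Om_def by simp
  obtain T where T: "T \<subseteq># Om" and Td: "(a+b) dvd (b*M - (sum_mset T + b * int (size T)))"
    and zsf: "\<forall>Z. Z \<subseteq># T \<longrightarrow> Z \<noteq> {#} \<longrightarrow> \<not> (a+b) dvd (sum_mset Z + b * int (size Z))"
    using minT[OF g] by blast
  have Tlt: "int (size T) < a + b" using dav1[of "a+b" T b] zsf a2 b2 by auto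
  have crit: False if "T' \<subseteq># Om" "(a+b) dvd (b*M - (sum_mset T' + b * int (size T')))"
    "sum_mset T' + b * int (size T') \<le> b*M" "a * int (size T') - sum_mset T' \<le> a*M" for T'
    using crit_contra[OF avoid, of a b T'] a2 b2 ca cb that unfolding Om_def by auto
  have Oel: "-k \<le> x \<and> x \<le> k \<and> x \<noteq> a \<and> x \<noteq> -b" if "x \<in># Om" for x
    using bnd that unfolding Om_def by auto
  have Tel: "-k \<le> x \<and> x \<le> k \<and> x \<noteq> a \<and> x \<noteq> -b" if "x \<in># T" for x
    using Oel[OF mset_subset_eqD[OF T that]] .
  define s where "s = int (size T)"
  have s0: "s \<ge> 0" by (simp add: s_def)
  have up: "x \<le> (if a = k then k-1 else k)" if "x \<in># T" for x using Tel[OF that] by auto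
  have lo: "-(if b = k then k-1 else k) \<le> x" if "x \<in># T" for x using Tel[OF that] by auto
  have sup: "sum_mset T \<le> s * (if a = k then k-1 else k)" unfolding s_def using up by (intro sum_mset_upper) auto
  have slo: "s * (-(if b = k then k-1 else k)) \<le> sum_mset T" unfolding s_def using lo by (intro sum_mset_lower) auto
  show False
  proof (cases "s \<le> a + b - 2 \<or> k \<ge> 5")
    case True
    have h1: "(k \<ge> 4 \<and> s \<le> a+b-2) \<or> (k \<ge> 5 \<and> s \<le> a+b-1)" using True k4 Tlt s_def by auto
    have h2: "(k \<ge> 4 \<and> s \<le> b+a-2) \<or> (k \<ge> 5 \<and> s \<le> b+a-1)" using h1 by (simp add: add.commute)
    have i1: "s * (b + (if a = k then k-1 else k)) \<le> b*(k*k-k-1)" by (rule ineq3[OF a2 ak b2 bk s0 h1])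
    have i2: "s * (a + (if b = k then k-1 else k)) \<le> a*(k*k-k-1)" by (rule ineq3[OF b2 bk a2 ak s0 h2])
    have e1: "s * (b + (if a = k then k-1 else k)) = b * s + s * (if a = k then k-1 else k)"
      by (simp add: algebra_simps)
    have e2: "s * (a + (if b = k then k-1 else k)) = a * s - s * (-(if b = k then k-1 else k))"
      by (simp add: algebra_simps)
    have bM: "b*M = b*(k*k-k-1)" "a*M = a*(k*k-k-1)" using Msq by simp_all
    have P: "sum_mset T + b * s \<le> b*M" using i1 sup bM e1 by linarith
    have Q: "a * s - sum_mset T \<le> a*M" using i2 slo bM e2 by linarith
    show False using crit[OF T Td] P Q s_def by simp
  next
    case False
    hence kk: "k = 4" and ss: "s = a + b - 1" using k4 Tlt s_def by auto
    have M11: "M = 11" using Msq kk by simp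
    have szT: "int (size T) = (a+b) - 1" using ss s_def by simp
    have cong: "(a+b) dvd (u - v)" if "u \<in># T" "v \<in># T" for u v
      using dav2[of "a+b" T b u v] zsf szT that a2 b2 by auto
    have "T \<noteq> {#}" using ss a2 b2 s_def by auto
    then obtain x0 where x0: "x0 \<in># T" by blast
    have cm: "(a+b) dvd (sum_mset T - s * x0)"
      unfolding s_def using cong[OF _ x0] by (intro sum_mset_cong_mod) auto
    have "x0 + b*(M+1) = (b*M - (sum_mset T + b * s)) + (sum_mset T - s * x0) + (a+b)*(b+x0)"
      unfolding ss by (simp add: algebra_simps)
    moreover have "(a+b) dvd ((b*M - (sum_mset T + b * s)) + (sum_mset T - s * x0) + (a+b)*(b+x0))"
      using Td s_def by (intro dvd_add[OF dvd_add[OF _ cm]]) simp_all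
    ultimately have d0: "(a+b) dvd (x0 + b*(M+1))" by simp
    have el: "(a+b-1)*(x+b) \<le> 11*b \<and> (a+b-1)*(a-x) \<le> 11*a" if x: "x \<in># T" for x
    proof -
      have "(a+b) dvd ((x - x0) + (x0 + b*(M+1)))" using dvd_add[OF cong[OF x x0] d0] .
      hence "(a+b) dvd (x + 12*b)" using M11 by (simp add: algebra_simps)
      thus ?thesis using k4elem[of a b x] Tel[OF x] a2 b2 ak bk kk by auto
    qed
    have c0: "a + b - 1 > 0" using a2 b2 by simp
    have "(a+b-1) * (sum_mset T + b * int (size T)) \<le> int (size T) * (11*b)"
      using el by (intro sum_mset_weighted_upper) auto
    moreover have "int (size T) * (11*b) = (a+b-1) * (b*M)" unfolding szT M11 by (simp add: algebra_simps)
    ultimately have "(a+b-1) * (sum_mset T + b * int (size T)) \<le> (a+b-1) * (b*M)" by simp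
    hence P: "sum_mset T + b * int (size T) \<le> b*M" using c0 by simp
    have "(a+b-1) * (a * int (size T) - sum_mset T) \<le> int (size T) * (11*a)"
      using el by (intro sum_mset_weighted_upper2) auto
    moreover have "int (size T) * (11*a) = (a+b-1) * (a*M)" unfolding szT M11 by (simp add: algebra_simps)
    ultimately have "(a+b-1) * (a * int (size T) - sum_mset T) \<le> (a+b-1) * (a*M)" by simp
    hence Q: "a * int (size T) - sum_mset T \<le> a*M" using c0 by simp
    show False using crit[OF T Td P Q] .
  qed
qed



lemma pow2_between:
  fixes k :: nat
  assumes "k \<ge> 1"
  shows "\<exists>j. k \<le> 2^j \<and> 2^j < 2*k"
  using assms
proof (induction k rule: dec_induct)
  case base
  show ?case by (rule exI[of _ 0]) simp
next
  case (step n)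
  then obtain j where j: "n \<le> 2^j" "2^j < 2*n" by blast
  show ?case
  proof (cases "Suc n \<le> 2^j")
    case True thus ?thesis using j by (intro exI[of _ j]) simp
  next
    case False
    hence "2^j = n" using j by simp
    thus ?thesis using step by (intro exI[of _ "Suc j"]) simp
  qed
qed

lemma coprime_odd_plus2:
  fixes u :: nat
  assumes "odd u"
  shows "coprime u (u+2)"
proof -
  have "gcd u (u+2) = gcd u 2" by (rule gcd_add2)
  moreover have "coprime u 2" using assms by simp
  ultimately show ?thesis by (simp add: coprime_iff_gcd_eq_1)
qed

lemma coprime_odd_plus4:
  fixes u :: nat
  assumes "odd u"
  shows "coprime u (u+4)"
proof -
  have g: "gcd u (u+4) = gcd u 4" by (rule gcd_add2)
  have "coprime u (2^2)" using assms by (subst coprime_power_right_iff) simp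
  moreover have "(4::nat) = 2^2" by simp
  ultimately have "coprime u 4" by metis
  thus ?thesis using g by (simp add: coprime_iff_gcd_eq_1)
qed

lemma t_lower:
  fixes k t :: nat
  assumes k4: "k \<ge> 4" and t0: "t > 0" and L: "Lcm {2..2*k-1} dvd t"
  shows "k^4 \<le> t"
proof -
  have dv: "n dvd t" if "2 \<le> n" "n \<le> 2*k-1" for n
    using L dvd_Lcm[of n "{2..2*k-1}"] that by (meson atLeastAtMost_iff dvd_trans)
  have "k \<ge> 1" using k4 by simp
  then obtain j where j: "k \<le> 2^j" "2^j < 2*k" using pow2_between by blast
  define u where "u = 2*k - 5"
  have ou: "odd u" using k4 by (simp add: u_def)
  have u1: "u dvd t" "(u+2) dvd t" "(u+4) dvd t" "(2^j) dvd t"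
    using dv k4 j by (auto simp: u_def)
  have c1: "coprime u (u+2)" by (rule coprime_odd_plus2[OF ou])
  have c2: "coprime u (u+4)" by (rule coprime_odd_plus4[OF ou])
  have c3: "coprime (u+2) (u+2+2)" using ou by (intro coprime_odd_plus2) simp
  have c4: "coprime ((2::nat)^j) (u*(u+2)*(u+4))" using ou by simp
  have "u*(u+2) dvd t" using divides_mult[OF u1(1) u1(2) c1] .
  moreover have "coprime (u*(u+2)) (u+4)"
  proof -
    have e: "u + 2 + 2 = u + 4" by simp
    have c3': "coprime (u+2) (u+4)" using c3 unfolding e .
    show ?thesis using c2 c3' by (rule iffD2[OF coprime_mult_left_iff, OF conjI])
  qed
  ultimately have "u*(u+2)*(u+4) dvd t" using divides_mult u1(3) by blast
  hence d: "2^j * (u*(u+2)*(u+4)) dvd t" using divides_mult[OF u1(4) _ c4] by blast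
  have le: "2^j * (u*(u+2)*(u+4)) \<le> t" using dvd_imp_le[OF d t0] .
  have "k*k \<le> u*(u+4)"
  proof -
    have "u + 4 = 2*k - 1" using k4 by (simp add: u_def)
    have "int (u*(u+4)) = (2*int k - 5)*(2*int k - 1)" using k4 by (simp add: u_def of_nat_diff)
    moreover have "(2*int k - 5)*(2*int k - 1) - int k * int k = 3 * (int k * (int k - 4)) + 5"
      by (simp add: algebra_simps)
    moreover have "int k * (int k - 4) \<ge> 0" using k4 by simp
    ultimately have "int (k*k) \<le> int (u*(u+4))" by simp
    thus ?thesis by linarith
  qed
  moreover have "k \<le> u + 2" using k4 by (simp add: u_def)
  ultimately have "k*k*k \<le> u*(u+4)*(u+2)" using mult_mono by blast
  hence "k*k*k*k \<le> u*(u+4)*(u+2)*2^j" using j(1) mult_mono by blast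
  moreover have "u*(u+4)*(u+2)*2^j = 2^j * (u*(u+2)*(u+4))" by (simp only: ac_simps)
  ultimately have "k*k*k*k \<le> 2^j * (u*(u+2)*(u+4))" by (rule ord_le_eq_trans)
  hence "k*k*k*k \<le> t" using le by linarith
  thus ?thesis by (simp add: power4_eq_xxxx)
qed

lemma heavy_pos:
  fixes S :: "int multiset" and k t M :: int
  assumes k4: "k \<ge> 4" and Msq: "M = k*k - k - 1"
    and bnd: "\<forall>x\<in>#S. -k \<le> x \<and> x \<le> k"
    and avoid: "\<forall>R. R \<subseteq># S \<longrightarrow> sum_mset R = 0 \<longrightarrow> int (size R) \<noteq> M"
    and sum0: "sum_mset S = 0" and sz: "int (size S) = t + M"
    and big: "t + M > (k*k + k + 1) * (M - 1)"
  shows "\<exists>a. 1 \<le> a \<and> a \<le> k \<and> int (count S a) \<ge> M"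
proof (rule ccontr)
  assume "\<not> ?thesis"
  hence small: "int (count S a) \<le> M - 1" if "1 \<le> a" "a \<le> k" for a using that by force
  have M0: "M \<ge> 0" using k4 Msq by (simp add: mult_right_mono[of 4 k k, simplified] le_trans) 
  have c0: "int (count S 0) \<le> M - 1"
  proof (rule ccontr)
    assume "\<not> ?thesis"
    hence "nat M \<le> count S 0" by linarith
    hence "replicate_mset (nat M) 0 \<subseteq># S"
      by (simp add: subseteq_mset_def count_replicate_mset)
    moreover have "sum_mset (replicate_mset (nat M) (0::int)) = 0" by simp
    moreover have "int (size (replicate_mset (nat M) (0::int))) = M" using M0 by simp
    ultimately show False using avoid by blast
  qed
  define Pos where "Pos = filter_mset (\<lambda>x. 0 < x) S"
  define Neg where "Neg = filter_mset (\<lambda>x. x < 0) S"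
  define Z where "Z = filter_mset (\<lambda>x. x = 0) S"
  have Seq: "S = Pos + Neg + Z"
    by (rule multiset_eqI) (auto simp: Pos_def Neg_def Z_def)
  have sZ: "sum_mset Z = 0"
  proof -
    have "Z = replicate_mset (count S 0) 0" unfolding Z_def by (rule filter_eq_replicate_mset)
    thus ?thesis by simp
  qed
  have zZ: "int (size Z) \<le> M - 1"
  proof -
    have "Z = replicate_mset (count S 0) 0" unfolding Z_def by (rule filter_eq_replicate_mset)
    thus ?thesis using c0 by simp
  qed
  have setP: "set_mset Pos \<subseteq> {1..k}" using bnd by (auto simp: Pos_def)
  have "int (size Pos) = (\<Sum>a\<in>set_mset Pos. int (count Pos a))"
    by (simp add: size_multiset_overloaded_eq)
  also have "\<dots> \<le> (\<Sum>a\<in>{1..k}. int (count Pos a))"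
    using setP by (intro sum_mono2) auto
  also have "\<dots> \<le> (\<Sum>a\<in>{1..k}. M - 1)"
    by (intro sum_mono) (use small in \<open>auto simp: Pos_def\<close>)
  also have "\<dots> = k * (M - 1)" using k4 by simp
  finally have zP: "int (size Pos) \<le> k * (M - 1)" .
  have sP: "sum_mset Pos \<le> int (size Pos) * k" using bnd by (intro sum_mset_upper) (auto simp: Pos_def)
  have sN: "sum_mset Neg \<le> int (size Neg) * (-1)" by (intro sum_mset_upper) (auto simp: Neg_def)
  have "sum_mset Pos + sum_mset Neg = 0" using sum0 sZ Seq by (metis add.right_neutral sum_mset.union)
  hence zN: "int (size Neg) \<le> int (size Pos) * k" using sP sN by linarith
  have "int (size Pos) * k \<le> (k * (M - 1)) * k" using zP k4 by (intro mult_right_mono) auto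
  hence zN': "int (size Neg) \<le> k * k * (M - 1)" using zN by (simp add: algebra_simps)
  have "int (size S) = int (size Pos) + int (size Neg) + int (size Z)" using Seq
    by (metis of_nat_add size_union)
  hence "t + M \<le> k * (M-1) + k*k*(M-1) + (M-1)" using sz zP zN' zZ by linarith
  moreover have "k * (M-1) + k*k*(M-1) + (M-1) = (k*k + k + 1) * (M - 1)" by (simp add: algebra_simps)
  ultimately show False using big by linarith
qed

lemma neg_transfer:
  fixes S :: "int multiset" and k M :: int
  assumes bnd: "\<forall>x\<in>#S. -k \<le> x \<and> x \<le> k"
    and avoid: "\<forall>R. R \<subseteq># S \<longrightarrow> sum_mset R = 0 \<longrightarrow> int (size R) \<noteq> M"
    and sum0: "sum_mset S = 0"
  shows "\<forall>x\<in>#image_mset uminus S. -k \<le> x \<and> x \<le> k"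
    and "\<forall>R. R \<subseteq># image_mset uminus S \<longrightarrow> sum_mset R = 0 \<longrightarrow> int (size R) \<noteq> M"
    and "sum_mset (image_mset uminus S) = 0"
    and "size (image_mset uminus S) = size S"
    and "\<And>x. count (image_mset uminus S) x = count S (-x)"
proof -
  have sneg: "sum_mset (image_mset uminus R) = - sum_mset R" for R :: "int multiset"
    by (induction R) auto
  have inv: "image_mset uminus (image_mset uminus R) = R" for R :: "int multiset"
    by (simp add: multiset.map_comp comp_def)
  show "\<forall>x\<in>#image_mset uminus S. -k \<le> x \<and> x \<le> k" using bnd by auto
  show "\<forall>R. R \<subseteq># image_mset uminus S \<longrightarrow> sum_mset R = 0 \<longrightarrow> int (size R) \<noteq> M"
  proof (intro allI impI)
    fix R assume R: "R \<subseteq># image_mset uminus S" "sum_mset R = 0"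
    have "image_mset uminus R \<subseteq># S" using image_mset_subseteq_mono[OF R(1)] inv by metis
    moreover have "sum_mset (image_mset uminus R) = 0" using R(2) sneg by simp
    ultimately have "int (size (image_mset uminus R)) \<noteq> M" using avoid by blast
    thus "int (size R) \<noteq> M" by simp
  qed
  show "sum_mset (image_mset uminus S) = 0" using sum0 sneg by simp
  show "size (image_mset uminus S) = size S" by simp
  fix x
  have v: "uminus -` {x} = {-x :: int}" by auto
  show "count (image_mset uminus S) x = count S (-x)"
  proof (cases "-x \<in># S")
    case True
    hence "uminus -` {x} \<inter> set_mset S = {-x}" using v by auto
    thus ?thesis by (simp add: count_image_mset)
  next
    case False
    hence "uminus -` {x} \<inter> set_mset S = {}" using v by auto
    thus ?thesis using False by (simp add: count_image_mset not_in_iff)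
  qed
qed



theorem mainTheorem5:
  fixes k t :: nat and S :: "int multiset"
  assumes "k \<ge> 4"
    and "t > 0"
    and "Lcm {2..2*k-1} dvd t"
    and "k_bounded (int k) S"
    and "zero_sum S"
    and "size S = t + k^2 - k - 1"
    and "t_avoiding t S"
  shows "set_mset S \<subseteq> {-1, int k - 1, int k} \<or> set_mset S \<subseteq> {1, -(int k - 1), -(int k)}"
proof -
  define K where "K = int k"
  define tt where "tt = int t"
  define M where "M = K^2 - K - 1"
  have k4: "K \<ge> 4" using assms(1) by (simp add: K_def)
  have Msq: "M = K*K - K - 1" by (simp add: M_def power2_eq_square)
  have kk: "K*K \<ge> 4*K" using k4 by (simp add: mult_right_mono)
  have M0: "M \<ge> 0" using Msq kk k4 by linarith
  have sz: "int (size S) = tt + M"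
  proof -
    have "k*k \<ge> 4*k" using assms(1) by simp
    moreover have "k^2 = k*k" by (simp add: power2_eq_square)
    ultimately have "k^2 \<ge> k + 1" using assms(1) by linarith
    hence "size S + k + 1 = t + k^2" using assms(6) by simp
    hence "int (size S) + K + 1 = tt + K^2" unfolding K_def tt_def by (metis of_nat_add of_nat_1 of_nat_power)
    thus ?thesis unfolding M_def by simp
  qed
  have sum0: "sum_mset S = 0" using assms(5) by (simp add: zero_sum_def)
  have bnd: "\<forall>x\<in>#S. -K \<le> x \<and> x \<le> K" using assms(4) by (simp add: k_bounded_def K_def)
  have avoid: "\<forall>R. R \<subseteq># S \<longrightarrow> sum_mset R = 0 \<longrightarrow> int (size R) \<noteq> M"
  proof (intro allI impI notI)
    fix R assume R: "R \<subseteq># S" "sum_mset R = 0" "int (size R) = M"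
    define T where "T = S - R"
    have "T \<subseteq># S" by (simp add: T_def)
    moreover have "int (size T) = tt" using R sz size_mset_mono[OF R(1)]
      by (simp add: T_def size_Diff_submset of_nat_diff)
    hence "size T = t" by (simp add: tt_def)
    moreover have "zero_sum T" using R(1,2) sum0 by (simp add: T_def zero_sum_def sum_mset_diff)
    ultimately show False using assms(7) unfolding t_avoiding_def by blast
  qed
  have divt: "\<forall>N. 2 \<le> N \<and> N \<le> 2*K - 1 \<longrightarrow> N dvd tt"
  proof (intro allI impI)
    fix N :: int assume N: "2 \<le> N \<and> N \<le> 2*K - 1"
    hence "nat N \<in> {2..2*k-1}" unfolding K_def by auto
    hence "nat N dvd t" using assms(3) dvd_Lcm dvd_trans by blast
    hence "int (nat N) dvd int t" by (simp only: of_nat_dvd_iff)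
    moreover have "int (nat N) = N" using N by simp
    ultimately show "N dvd tt" by (simp add: tt_def)
  qed
  have t2: "2 dvd tt" using divt k4 by auto
  have tl: "K^4 \<le> tt" using t_lower[OF assms(1) assms(2) assms(3)] unfolding K_def tt_def
    by (metis of_nat_le_iff of_nat_power)
  have big: "tt + M > (K*K + K + 1) * (M - 1)"
  proof -
    have "(K*K + K + 1) * (M - 1) = K^4 - 2*(K*K) - 3*K - 2" by (simp add: Msq power4_eq_xxxx algebra_simps)
    moreover have "K*K \<ge> 0" by simp
    ultimately show ?thesis using tl M0 k4 by linarith
  qed
  obtain a where a: "1 \<le> a" "a \<le> K" "int (count S a) \<ge> M"
    using heavy_pos[OF k4 Msq bnd avoid sum0 sz big] by blast
  define S' where "S' = image_mset uminus S"
  note nt = neg_transfer[OF bnd avoid sum0, folded S'_def]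
  have sz': "int (size S') = tt + M" using nt(4) sz by simp
  obtain b where b: "1 \<le> b" "b \<le> K" "int (count S' b) \<ge> M"
    using heavy_pos[OF k4 Msq nt(1) nt(2) nt(3) sz' big] by blast
  have b': "int (count S (-b)) \<ge> M" using b(3) nt(5) by simp
  show ?thesis
  proof (cases "int (count S (-1)) \<ge> M")
    case True
    have "set_mset S \<subseteq> {-1, K-1, K}"
      using partI[OF k4 M_def bnd avoid sum0 sz divt True a] .
    thus ?thesis unfolding K_def by simp
  next
    case False
    show ?thesis
    proof (cases "int (count S 1) \<ge> M")
      case True
      have c1: "int (count S' (-1)) \<ge> M" using True nt(5) by simp
      have "set_mset S' \<subseteq> {-1, K-1, K}"
        using partI[OF k4 M_def nt(1) nt(2) nt(3) sz' divt c1 b] .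
      hence "set_mset S \<subseteq> {1, -(K-1), -K}" unfolding S'_def by auto
      thus ?thesis unfolding K_def by simp
    next
      case False2: False
      have a2: "2 \<le> a" using a False2 by (cases "a = 1") auto
      have b2: "2 \<le> b" using b' b(1) False by (cases "b = 1") auto
      have False using partIII[OF k4 M_def bnd avoid sum0 sz divt t2 a2 a(2) a(3) b2 b(2) b'] .
      thus ?thesis ..
    qed
  qed
qed


end
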